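(* Let $G$ be a group with the unique root property. Suppose that for infinitely many primes $p$ there exist a normal subgroup $H$ of index $p$ in $G$ and an automorphism of $H$ that does not extend to an automorphism of $G$. Then the abstract commensurator $\mathrm{Comm}(G)$ is not finitely generated.
   Context: A group $G$ has the unique root property if for all $x,y\in G$ and every positive integer $n$, $x^n=y^n$ implies $x=y$. The abstract commensurator $\mathrm{Comm}(G)$ is the group of equivalence classes of isomorphisms between finite-index subgroups of $G$, two such isomorphisms being equivalent if they agree on some finite-index subgroup of $G$ on which both are defined; the product of $\alpha:G_1\to G_1'$ and $\beta:G_2\to G_2'$ is $\alpha\beta:\alpha^{-1}(G_1'\cap G_2)\to\beta(G_1'\cap G_2)$. *)

theory Defs
  imports "HOL-Algebra.Algebra" "HOL-Computational_Algebra.Primes"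
begin

definition unique_root :: "('a, 'b) monoid_scheme \<Rightarrow> bool" where
  "unique_root G \<longleftrightarrow> (\<forall>x\<in>carrier G. \<forall>y\<in>carrier G. \<forall>n::nat. n > 0 \<longrightarrow>
      x [^]\<^bsub>G\<^esub> n = y [^]\<^bsub>G\<^esub> n \<longrightarrow> x = y)"

definition fin_index_subgroup :: "('a, 'b) monoid_scheme \<Rightarrow> 'a set \<Rightarrow> bool" where
  "fin_index_subgroup G H \<longleftrightarrow> subgroup H G \<and> finite (rcosets\<^bsub>G\<^esub> H)"

definition comm_isos :: "('a, 'b) monoid_scheme \<Rightarrow> ('a set \<times> 'a set \<times> ('a \<Rightarrow> 'a)) set" where
  "comm_isos G = {(A, B, f). fin_index_subgroup G A \<and> fin_index_subgroup G B \<and>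
      f \<in> iso (G\<lparr>carrier := A\<rparr>) (G\<lparr>carrier := B\<rparr>)}"

definition comm_rel :: "('a, 'b) monoid_scheme \<Rightarrow>
    (('a set \<times> 'a set \<times> ('a \<Rightarrow> 'a)) \<times> ('a set \<times> 'a set \<times> ('a \<Rightarrow> 'a))) set" where
  "comm_rel G = {((A, B, f), (A', B', f')).
      (A, B, f) \<in> comm_isos G \<and> (A', B', f') \<in> comm_isos G \<and>
      (\<exists>K. fin_index_subgroup G K \<and> K \<subseteq> A \<and> K \<subseteq> A' \<and> (\<forall>x\<in>K. f x = f' x))}"

definition comm_comp :: "'a set \<times> 'a set \<times> ('a \<Rightarrow> 'a) \<Rightarrow> 'a set \<times> 'a set \<times> ('a \<Rightarrow> 'a)
    \<Rightarrow> 'a set \<times> 'a set \<times> ('a \<Rightarrow> 'a)" where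
  "comm_comp \<alpha> \<beta> = (case \<alpha> of (A, B, f) \<Rightarrow> case \<beta> of (A', B', g) \<Rightarrow>
      ({x \<in> A. f x \<in> B \<inter> A'}, g ` (B \<inter> A'), g \<circ> f))"

definition comm_mult :: "('a, 'b) monoid_scheme \<Rightarrow> ('a set \<times> 'a set \<times> ('a \<Rightarrow> 'a)) set
    \<Rightarrow> ('a set \<times> 'a set \<times> ('a \<Rightarrow> 'a)) set \<Rightarrow> ('a set \<times> 'a set \<times> ('a \<Rightarrow> 'a)) set" where
  "comm_mult G U V = comm_rel G `` {comm_comp a b | a b. a \<in> U \<and> b \<in> V}"

definition Comm :: "('a, 'b) monoid_scheme \<Rightarrow> ('a set \<times> 'a set \<times> ('a \<Rightarrow> 'a)) set monoid" where
  "Comm G = \<lparr> carrier = comm_isos G // comm_rel G,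
      monoid.mult = comm_mult G,
      one = comm_rel G `` {(carrier G, carrier G, (\<lambda>x. x))} \<rparr>"

definition finitely_generated_group :: "('a, 'b) monoid_scheme \<Rightarrow> bool" where
  "finitely_generated_group G \<longleftrightarrow>
     (\<exists>S. finite S \<and> S \<subseteq> carrier G \<and> generate G S = carrier G)"

end

theory Submission
  imports Defs
begin

context group begin

definition cov :: "'a set \<Rightarrow> 'a set \<Rightarrow> bool" where
  "cov K F \<longleftrightarrow> F \<subseteq> carrier G \<and> finite F \<and> (\<forall>g\<in>carrier G. \<exists>x\<in>F. g \<otimes> inv x \<in> K)"

lemma fin_index_iff: "fin_index_subgroup G K \<longleftrightarrow> subgroup K G \<and> (\<exists>F. cov K F)"
proof
  assume a: "fin_index_subgroup G K"
  hence sg: "subgroup K G" and fin: "finite (rcosets K)" by (auto simp: fin_index_subgroup_def)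
  define r where "r C = (SOME x. x \<in> carrier G \<and> C = K #> x)" for C
  have r: "r C \<in> carrier G \<and> C = K #> r C" if Cin: "C \<in> rcosets K" for C
  proof -
    obtain x where "x \<in> carrier G \<and> C = K #> x" using Cin unfolding RCOSETS_def by auto
    thus ?thesis unfolding r_def by (rule someI)
  qed
  have "cov K (r ` (rcosets K))"
    unfolding cov_def
  proof (intro conjI ballI)
    show "r ` (rcosets K) \<subseteq> carrier G" using r by auto
    show "finite (r ` (rcosets K))" using fin by auto
  next
    fix g assume g: "g \<in> carrier G"
    have C: "K #> g \<in> rcosets K" using g by (rule rcosetsI[OF subgroup.subset[OF sg]])
    have "g \<in> K #> r (K #> g)" using r[OF C] rcos_self[OF g sg] by simp
    hence "g \<otimes> inv (r (K #> g)) \<in> K"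
      using subgroup.rcos_module[OF sg is_group] r[OF C] g by blast
    thus "\<exists>x\<in>r ` (rcosets K). g \<otimes> inv x \<in> K" using C by blast
  qed
  thus "subgroup K G \<and> (\<exists>F. cov K F)" using sg by blast
next
  assume "subgroup K G \<and> (\<exists>F. cov K F)"
  then obtain F where sg: "subgroup K G" and c: "cov K F" by blast
  have "rcosets K \<subseteq> (\<lambda>x. K #> x) ` F"
  proof
    fix C assume "C \<in> rcosets K"
    then obtain g where g: "g \<in> carrier G" and C: "C = K #> g" unfolding RCOSETS_def by auto
    then obtain x where x: "x \<in> F" "g \<otimes> inv x \<in> K" using c unfolding cov_def by blast
    have xc: "x \<in> carrier G" using x c unfolding cov_def by auto
    have "g \<in> K #> x" using subgroup.rcos_module[OF sg is_group xc g] x by blast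
    hence "K #> x = K #> g" using repr_independence[OF _ xc sg] by blast
    thus "C \<in> (\<lambda>x. K #> x) ` F" using C x by blast
  qed
  moreover have "finite F" using c unfolding cov_def by auto
  ultimately show "fin_index_subgroup G K" using sg unfolding fin_index_subgroup_def
    by (meson finite_imageI finite_subset)
qed


lemma gid1: "a \<in> carrier G \<Longrightarrow> b \<in> carrier G \<Longrightarrow> c \<in> carrier G \<Longrightarrow>
  (a \<otimes> inv b) \<otimes> inv (c \<otimes> inv b) = a \<otimes> inv c"
  by (simp add: inv_mult_group m_assoc) (simp add: m_assoc[symmetric])

lemma gid2: "g \<in> carrier G \<Longrightarrow> t \<in> carrier G \<Longrightarrow> x \<in> carrier G \<Longrightarrow>
  g \<otimes> inv (t \<otimes> x) = (g \<otimes> inv x) \<otimes> inv t"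
  by (simp add: inv_mult_group m_assoc)

lemma rel_cover:
  assumes K: "subgroup K G" and c: "cov K F" and L: "subgroup L G"
  shows "\<exists>T. finite T \<and> T \<subseteq> L \<and> (\<forall>l\<in>L. \<exists>t\<in>T. l \<otimes> inv t \<in> K \<inter> L)"
proof -
  define ch where "ch x = (SOME t. t \<in> L \<and> t \<otimes> inv x \<in> K)" for x
  define T where "T = ch ` {x\<in>F. \<exists>t\<in>L. t \<otimes> inv x \<in> K}"
  have chp: "ch x \<in> L \<and> ch x \<otimes> inv x \<in> K" if "\<exists>t\<in>L. t \<otimes> inv x \<in> K" for x
    unfolding ch_def using that by (metis (mono_tags, lifting) someI_ex)
  have Lc: "L \<subseteq> carrier G" using L subgroup.subset by blast
  have Fc: "F \<subseteq> carrier G" "finite F" using c unfolding cov_def by auto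
  show ?thesis
  proof (intro exI conjI ballI)
    show "finite T" unfolding T_def using Fc by auto
    show "T \<subseteq> L" unfolding T_def using chp by auto
  next
    fix l assume l: "l \<in> L"
    then obtain x where x: "x \<in> F" "l \<otimes> inv x \<in> K" using c Lc unfolding cov_def by blast
    hence ex: "\<exists>t\<in>L. t \<otimes> inv x \<in> K" using l by blast
    note cx = chp[OF ex]
    have "(l \<otimes> inv x) \<otimes> inv (ch x \<otimes> inv x) \<in> K"
      using x cx K by (simp add: subgroup.m_closed subgroup.m_inv_closed)
    moreover have "l \<in> carrier G" "x \<in> carrier G" "ch x \<in> carrier G" using l x cx Lc Fc by auto
    ultimately have "l \<otimes> inv ch x \<in> K" using gid1[of l x "ch x"] by simp
    moreover have "l \<otimes> inv ch x \<in> L" using l cx L by (simp add: subgroup.m_closed subgroup.m_inv_closed)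
    moreover have "ch x \<in> T" unfolding T_def using x ex by blast
    ultimately show "\<exists>t\<in>T. l \<otimes> inv t \<in> K \<inter> L" by blast
  qed
qed

lemma trans_cover:
  assumes K: "subgroup K G" and T: "finite T" "T \<subseteq> carrier G"
    and rel: "\<forall>l\<in>L. \<exists>t\<in>T. l \<otimes> inv t \<in> K" and c: "cov L F"
  shows "cov K ((\<lambda>(t,x). t \<otimes> x) ` (T \<times> F))"
  unfolding cov_def
proof (intro conjI ballI)
  have Fc: "F \<subseteq> carrier G" "finite F" using c unfolding cov_def by auto
  show "(\<lambda>(t,x). t \<otimes> x) ` (T \<times> F) \<subseteq> carrier G" using T Fc by auto
  show "finite ((\<lambda>(t,x). t \<otimes> x) ` (T \<times> F))" using T Fc by auto
next
  fix g assume g: "g \<in> carrier G"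
  have Fc: "F \<subseteq> carrier G" using c unfolding cov_def by auto
  obtain x where x: "x \<in> F" "g \<otimes> inv x \<in> L" using c g unfolding cov_def by blast
  then obtain t where t: "t \<in> T" "(g \<otimes> inv x) \<otimes> inv t \<in> K" using rel by blast
  have "t \<in> carrier G" "x \<in> carrier G" using t x T Fc by auto
  hence "g \<otimes> inv (t \<otimes> x) \<in> K" using gid2[of g t x] t g by simp
  thus "\<exists>y\<in>(\<lambda>(t,x). t \<otimes> x) ` (T \<times> F). g \<otimes> inv y \<in> K" using t x by blast
qed

definition fi :: "'a set \<Rightarrow> bool" where
  "fi K \<longleftrightarrow> subgroup K G \<and> (\<exists>F. cov K F)"

lemma fi_int: assumes "fi K" "fi L" shows "fi (K \<inter> L)"
proof -
  from assms obtain F F' where K: "subgroup K G" and c: "cov K F" and L: "subgroup L G" and c': "cov L F'"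
    unfolding fi_def by blast
  obtain T where T: "finite T" "T \<subseteq> L" "\<forall>l\<in>L. \<exists>t\<in>T. l \<otimes> inv t \<in> K \<inter> L"
    using rel_cover[OF K c L] by blast
  have KL: "subgroup (K \<inter> L) G" using K L by (rule subgroups_Inter_pair)
  have "T \<subseteq> carrier G" using T L subgroup.subset by blast
  thus ?thesis unfolding fi_def using trans_cover[OF KL T(1) _ T(3) c'] KL by blast
qed


end

context group begin
definition siso :: "'a set \<Rightarrow> 'a set \<Rightarrow> ('a \<Rightarrow> 'a) \<Rightarrow> bool" where
  "siso A B f \<longleftrightarrow> subgroup A G \<and> subgroup B G \<and> f ` A = B \<and> inj_on f A \<and>
     (\<forall>x\<in>A. \<forall>y\<in>A. f (x \<otimes> y) = f x \<otimes> f y)"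

lemma iso_siso: "subgroup A G \<Longrightarrow> subgroup B G \<Longrightarrow>
   f \<in> iso (G\<lparr>carrier := A\<rparr>) (G\<lparr>carrier := B\<rparr>) \<longleftrightarrow> siso A B f"
  unfolding siso_def iso_def hom_def bij_betw_def by auto

lemma siso_sub: "siso A B f \<Longrightarrow> subgroup A G" "siso A B f \<Longrightarrow> subgroup B G"
  unfolding siso_def by auto

lemma siso_in: "siso A B f \<Longrightarrow> x \<in> A \<Longrightarrow> f x \<in> B"
  unfolding siso_def by auto

lemma siso_carr: "siso A B f \<Longrightarrow> x \<in> A \<Longrightarrow> f x \<in> carrier G"
  unfolding siso_def using subgroup.subset by blast

lemma sub_carr: "subgroup A G \<Longrightarrow> x \<in> A \<Longrightarrow> x \<in> carrier G"
  using subgroup.subset by blast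

lemma siso_mult: "siso A B f \<Longrightarrow> x \<in> A \<Longrightarrow> y \<in> A \<Longrightarrow> f (x \<otimes> y) = f x \<otimes> f y"
  unfolding siso_def by auto

lemma siso_one: assumes "siso A B f" shows "f \<one> = \<one>"
proof -
  have A: "subgroup A G" using assms siso_sub by auto
  have o: "\<one> \<in> A" using subgroup.one_closed[OF A] .
  have c: "f \<one> \<in> carrier G" using siso_carr[OF assms o] .
  have "f (\<one> \<otimes> \<one>) = f \<one> \<otimes> f \<one>" using siso_mult[OF assms o o] .
  hence "f \<one> \<otimes> f \<one> = f \<one>" by simp
  thus ?thesis using l_cancel_one[OF c c] by blast
qed

lemma siso_inv: assumes "siso A B f" "x \<in> A" shows "f (inv x) = inv (f x)"
proof -
  have A: "subgroup A G" using assms siso_sub by auto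
  have ix: "inv x \<in> A" using subgroup.m_inv_closed[OF A assms(2)] .
  have xc: "x \<in> carrier G" using sub_carr[OF A assms(2)] .
  have "f (inv x \<otimes> x) = f (inv x) \<otimes> f x" using siso_mult[OF assms(1) ix assms(2)] .
  moreover have "inv x \<otimes> x = \<one>" using xc by (rule l_inv)
  ultimately have e: "f (inv x) \<otimes> f x = \<one>" using siso_one[OF assms(1)] by metis
  show ?thesis using inv_equality[OF e siso_carr[OF assms(1) assms(2)] siso_carr[OF assms(1) ix]] by (rule sym)
qed

lemma sub_pow: assumes "subgroup A G" "x \<in> A" shows "x [^] (n::nat) \<in> A"
proof (induction n)
  case 0 thus ?case using subgroup.one_closed[OF assms(1)] by simp
next
  case (Suc n) thus ?case using subgroup.m_closed[OF assms(1) Suc assms(2)] by simp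
qed

lemma siso_pow: assumes "siso A B f" "x \<in> A" shows "f (x [^] (n::nat)) = f x [^] n"
proof (induction n)
  case 0 thus ?case using siso_one[OF assms(1)] by simp
next
  case (Suc n)
  have A: "subgroup A G" using assms siso_sub by auto
  have "x [^] n \<in> A" using A assms(2) by (rule sub_pow)
  hence "f (x [^] n \<otimes> x) = f (x [^] n) \<otimes> f x" using siso_mult[OF assms(1) _ assms(2)] by blast
  thus ?case using Suc by simp
qed

lemma siso_invmap: assumes "siso A B f" shows "siso B A (inv_into A f)"
proof -
  have inj: "inj_on f A" and im: "f ` A = B" using assms unfolding siso_def by auto
  have bij: "bij_betw (inv_into A f) B A" using bij_betw_inv_into[of f A B] inj im unfolding bij_betw_def by blast
  have A: "subgroup A G" and B: "subgroup B G" using assms siso_sub by auto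
  have m: "inv_into A f (x \<otimes> y) = inv_into A f x \<otimes> inv_into A f y" if "x \<in> B" "y \<in> B" for x y
  proof -
    define a where "a = inv_into A f x"
    define b where "b = inv_into A f y"
    have a: "a \<in> A" "f a = x" using that im unfolding a_def by (auto intro: inv_into_into f_inv_into_f)
    have b: "b \<in> A" "f b = y" using that im unfolding b_def by (auto intro: inv_into_into f_inv_into_f)
    have ab: "a \<otimes> b \<in> A" using subgroup.m_closed[OF A a(1) b(1)] .
    have "f (a \<otimes> b) = x \<otimes> y" using siso_mult[OF assms a(1) b(1)] a b by simp
    hence "inv_into A f (x \<otimes> y) = a \<otimes> b" using inv_into_f_f[OF inj ab] by simp
    thus ?thesis unfolding a_def b_def .
  qed
  have "inv_into A f ` B = A" "inj_on (inv_into A f) B" using bij unfolding bij_betw_def by auto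
  thus ?thesis unfolding siso_def using A B m by blast
qed

lemma siso_comp: assumes f: "siso A B f" and g: "siso B C g" shows "siso A C (g \<circ> f)"
proof -
  have "inj_on (g \<circ> f) A" using f g unfolding siso_def by (metis comp_inj_on)
  moreover have "(g \<circ> f) ` A = C" using f g unfolding siso_def by (metis image_comp)
  moreover have "(g \<circ> f) (x \<otimes> y) = (g \<circ> f) x \<otimes> (g \<circ> f) y" if "x \<in> A" "y \<in> A" for x y
  proof -
    have "f (x \<otimes> y) = f x \<otimes> f y" using siso_mult[OF f that] .
    moreover have "g (f x \<otimes> f y) = g (f x) \<otimes> g (f y)" using siso_mult[OF g siso_in[OF f that(1)] siso_in[OF f that(2)]] .
    ultimately show ?thesis by simp
  qed
  ultimately show ?thesis using f g unfolding siso_def by blast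
qed

lemma siso_restr: assumes "siso A B f" "subgroup A' G" "A' \<subseteq> A" shows "siso A' (f ` A') f"
proof -
  have sg: "subgroup (f ` A') G"
  proof (rule subgroupI)
    show "f ` A' \<subseteq> carrier G" using siso_carr[OF assms(1)] assms(3) by auto
    show "f ` A' \<noteq> {}" using subgroup.one_closed[OF assms(2)] by auto
  next
    fix a assume "a \<in> f ` A'"
    then obtain x where x: "x \<in> A'" "a = f x" by auto
    have xA: "x \<in> A" using x assms(3) by blast
    have "inv a = f (inv x)" using siso_inv[OF assms(1) xA] x by simp
    thus "inv a \<in> f ` A'" using subgroup.m_inv_closed[OF assms(2) x(1)] by blast
  next
    fix a b assume "a \<in> f ` A'" "b \<in> f ` A'"
    then obtain x y where x: "x \<in> A'" "a = f x" "y \<in> A'" "b = f y" by auto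
    have xA: "x \<in> A" "y \<in> A" using x assms(3) by auto
    have "a \<otimes> b = f (x \<otimes> y)" using siso_mult[OF assms(1) xA] x by simp
    thus "a \<otimes> b \<in> f ` A'" using subgroup.m_closed[OF assms(2) x(1) x(3)] by blast
  qed
  have "inj_on f A'" using assms(1,3) unfolding siso_def by (metis inj_on_subset)
  moreover have "\<forall>x\<in>A'. \<forall>y\<in>A'. f (x \<otimes> y) = f x \<otimes> f y" using assms(1,3) unfolding siso_def by blast
  ultimately show ?thesis using assms(2) sg unfolding siso_def by blast
qed

lemma preimage_subgroup: assumes f: "siso A B f" and C: "subgroup C G" shows "subgroup {x\<in>A. f x \<in> C} G"
proof (rule subgroupI)
  have A: "subgroup A G" using f siso_sub by auto
  show "{x\<in>A. f x \<in> C} \<subseteq> carrier G" using sub_carr[OF A] by blast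
  have "\<one> \<in> {x\<in>A. f x \<in> C}" using subgroup.one_closed[OF A] siso_one[OF f] subgroup.one_closed[OF C] by simp
  thus "{x\<in>A. f x \<in> C} \<noteq> {}" by blast
next
  have A: "subgroup A G" using f siso_sub by auto
  fix a assume a: "a \<in> {x\<in>A. f x \<in> C}"
  hence "a \<in> A" "f a \<in> C" by auto
  moreover have "f (inv a) = inv (f a)" using siso_inv[OF f] a by blast
  ultimately show "inv a \<in> {x\<in>A. f x \<in> C}"
    using subgroup.m_inv_closed[OF A] subgroup.m_inv_closed[OF C] by simp
next
  have A: "subgroup A G" using f siso_sub by auto
  fix a b assume "a \<in> {x\<in>A. f x \<in> C}" "b \<in> {x\<in>A. f x \<in> C}"
  hence ab: "a \<in> A" "f a \<in> C" "b \<in> A" "f b \<in> C" by auto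
  have "f (a \<otimes> b) = f a \<otimes> f b" using siso_mult[OF f ab(1) ab(3)] .
  thus "a \<otimes> b \<in> {x\<in>A. f x \<in> C}" using subgroup.m_closed[OF A ab(1) ab(3)] subgroup.m_closed[OF C ab(2) ab(4)] by simp
qed

lemma siso_preimage: assumes "siso A B f" "subgroup C G" "C \<subseteq> B" shows "siso {x\<in>A. f x \<in> C} C f"
proof -
  have im: "f ` A = B" using assms(1) unfolding siso_def by blast
  have "f ` {x\<in>A. f x \<in> C} = C"
  proof
    show "f ` {x\<in>A. f x \<in> C} \<subseteq> C" by blast
    show "C \<subseteq> f ` {x\<in>A. f x \<in> C}"
    proof
      fix c assume "c \<in> C"
      then obtain a where "a \<in> A" "c = f a" using im assms(3) by blast
      thus "c \<in> f ` {x\<in>A. f x \<in> C}" using \<open>c \<in> C\<close> by blast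
    qed
  qed
  moreover have "{x\<in>A. f x \<in> C} \<subseteq> A" by blast
  ultimately show ?thesis using siso_restr[OF assms(1) preimage_subgroup[OF assms(1,2)]] by metis
qed

lemma fi_sub: "fi K \<Longrightarrow> subgroup K G" unfolding fi_def by auto

lemma fi_preimage: assumes f: "siso A B f" and fA: "fi A" and fC: "fi C" and CB: "C \<subseteq> B"
  shows "fi {x\<in>A. f x \<in> C}"
proof -
  obtain FC where C: "subgroup C G" and cC: "cov C FC" using fC unfolding fi_def by blast
  obtain FA where A: "subgroup A G" and cA: "cov A FA" using fA unfolding fi_def by blast
  have B: "subgroup B G" using f siso_sub by auto
  obtain T where T: "finite T" "T \<subseteq> B" "\<forall>l\<in>B. \<exists>t\<in>T. l \<otimes> inv t \<in> C \<inter> B"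
    using rel_cover[OF C cC B] by blast
  have inj: "inj_on f A" and im: "f ` A = B" using f unfolding siso_def by auto
  define T0 where "T0 = inv_into A f ` T"
  have T0A: "T0 \<subseteq> A" unfolding T0_def using T(2) im by (metis image_subsetI inv_into_into subsetD)
  have D: "subgroup {x\<in>A. f x \<in> C} G" by (rule preimage_subgroup[OF f C])
  have rel: "\<forall>l\<in>A. \<exists>t\<in>T0. l \<otimes> inv t \<in> {x\<in>A. f x \<in> C}"
  proof
    fix a assume a: "a \<in> A"
    hence "f a \<in> B" using im by blast
    then obtain t where t: "t \<in> T" "f a \<otimes> inv t \<in> C" using T(3) by blast
    define t0 where "t0 = inv_into A f t"
    have t0: "t0 \<in> A" "f t0 = t" unfolding t0_def using t T(2) im by (auto intro: inv_into_into f_inv_into_f)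
    have it0: "inv t0 \<in> A" using subgroup.m_inv_closed[OF A t0(1)] .
    have "f (a \<otimes> inv t0) = f a \<otimes> inv t" using siso_mult[OF f a it0] siso_inv[OF f t0(1)] t0 by simp
    moreover have "a \<otimes> inv t0 \<in> A" using subgroup.m_closed[OF A a it0] .
    ultimately have "a \<otimes> inv t0 \<in> {x\<in>A. f x \<in> C}" using t by simp
    moreover have "t0 \<in> T0" unfolding T0_def t0_def using t by auto
    ultimately show "\<exists>t\<in>T0. a \<otimes> inv t \<in> {x\<in>A. f x \<in> C}" by blast
  qed
  have "finite T0" using T(1) unfolding T0_def by blast
  moreover have "T0 \<subseteq> carrier G" using T0A subgroup.subset[OF A] by blast
  ultimately show ?thesis unfolding fi_def using trans_cover[OF D _ _ rel cA] D by blast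
qed

lemma fi_image: assumes f: "siso A B f" and fB: "fi B" and fC: "fi C" and CA: "C \<subseteq> A"
  shows "fi (f ` C)"
proof -
  obtain FC where C: "subgroup C G" and cC: "cov C FC" using fC unfolding fi_def by blast
  obtain FB where B: "subgroup B G" and cB: "cov B FB" using fB unfolding fi_def by blast
  have A: "subgroup A G" using f siso_sub by auto
  obtain T where T: "finite T" "T \<subseteq> A" "\<forall>l\<in>A. \<exists>t\<in>T. l \<otimes> inv t \<in> C \<inter> A"
    using rel_cover[OF C cC A] by blast
  have im: "f ` A = B" using f unfolding siso_def by auto
  have fCs: "subgroup (f ` C) G" using siso_restr[OF f C CA] siso_sub by blast
  have rel: "\<forall>l\<in>B. \<exists>t\<in>f ` T. l \<otimes> inv t \<in> f ` C"
  proof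
    fix b assume "b \<in> B"
    then obtain a where a: "a \<in> A" "b = f a" using im by auto
    then obtain t where t: "t \<in> T" "a \<otimes> inv t \<in> C" using T(3) by blast
    have tA1: "t \<in> A" using t T(2) by blast
    have tA: "t \<in> A" "inv t \<in> A" using tA1 subgroup.m_inv_closed[OF A tA1] by auto
    have "f (a \<otimes> inv t) = b \<otimes> inv (f t)" using siso_mult[OF f a(1) tA(2)] siso_inv[OF f tA(1)] a by simp
    hence "b \<otimes> inv (f t) \<in> f ` C" using t by (metis image_eqI)
    thus "\<exists>t\<in>f ` T. b \<otimes> inv t \<in> f ` C" using t by blast
  qed
  have "finite (f ` T)" using T(1) by blast
  moreover have "f ` T \<subseteq> carrier G" using T(2) siso_carr[OF f] by blast
  ultimately show ?thesis unfolding fi_def using trans_cover[OF fCs _ _ rel cB] fCs by blast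
qed

end

context group begin

lemma fi_iff: "fin_index_subgroup G K \<longleftrightarrow> fi K" unfolding fi_def by (rule fin_index_iff)

lemma mem_I: "(A,B,f) \<in> comm_isos G \<longleftrightarrow> fi A \<and> fi B \<and> siso A B f"
  unfolding comm_isos_def fi_iff using iso_siso fi_sub by auto

lemma mem_R: "((A,B,f),(A',B',f')) \<in> comm_rel G \<longleftrightarrow> (A,B,f) \<in> comm_isos G \<and> (A',B',f') \<in> comm_isos G \<and>
   (\<exists>K. fi K \<and> K \<subseteq> A \<and> K \<subseteq> A' \<and> (\<forall>x\<in>K. f x = f' x))"
  unfolding comm_rel_def fi_iff by auto

lemma R_sub: "comm_rel G \<subseteq> comm_isos G \<times> comm_isos G"
  unfolding comm_rel_def by auto

lemma R_refl: "u \<in> comm_isos G \<Longrightarrow> (u,u) \<in> comm_rel G"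
  by (cases u) (auto simp: mem_R mem_I)

lemma R_sym: "(u,v) \<in> comm_rel G \<Longrightarrow> (v,u) \<in> comm_rel G"
  by (cases u, cases v) (auto simp: mem_R)

lemma R_trans: assumes "(u,v) \<in> comm_rel G" "(v,w) \<in> comm_rel G" shows "(u,w) \<in> comm_rel G"
proof -
  obtain A B f A' B' f' A'' B'' f'' where uvw: "u = (A,B,f)" "v = (A',B',f')" "w = (A'',B'',f'')"
    by (metis prod_cases3)
  obtain K K' where K: "fi K" "K \<subseteq> A" "K \<subseteq> A'" "\<forall>x\<in>K. f x = f' x"
    and K': "fi K'" "K' \<subseteq> A'" "K' \<subseteq> A''" "\<forall>x\<in>K'. f' x = f'' x"
    using assms unfolding uvw mem_R by blast
  have "fi (K \<inter> K')" using fi_int K K' by blast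
  moreover have "K \<inter> K' \<subseteq> A" "K \<inter> K' \<subseteq> A''" "\<forall>x\<in>K \<inter> K'. f x = f'' x" using K K' by auto
  ultimately show ?thesis using assms unfolding uvw mem_R by blast
qed

lemma R_equiv: "equiv (comm_isos G) (comm_rel G)"
  unfolding equiv_def refl_on_def sym_def trans_def using R_sub R_refl R_sym R_trans by blast

lemma comp_I: assumes "u \<in> comm_isos G" "v \<in> comm_isos G" shows "comm_comp u v \<in> comm_isos G"
proof -
  obtain A B f A' B' g where uv: "u = (A,B,f)" "v = (A',B',g)" by (metis prod_cases3)
  have u: "fi A" "fi B" "siso A B f" and v: "fi A'" "fi B'" "siso A' B' g"
    using assms unfolding uv mem_I by auto
  have C: "fi (B \<inter> A')" using fi_int u v by blast
  have D: "fi {x\<in>A. f x \<in> B \<inter> A'}" using fi_preimage[OF u(3) u(1) C] by blast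
  have s1: "siso {x\<in>A. f x \<in> B \<inter> A'} (B \<inter> A') f" using siso_preimage[OF u(3) fi_sub[OF C]] by blast
  have s2: "siso (B \<inter> A') (g ` (B \<inter> A')) g" using siso_restr[OF v(3) fi_sub[OF C]] by blast
  have E: "fi (g ` (B \<inter> A'))" using fi_image[OF v(3) v(2) C] by blast
  show ?thesis unfolding uv comm_comp_def using mem_I D E siso_comp[OF s1 s2] by simp
qed

lemma comp_R: assumes "(u,u') \<in> comm_rel G" "(v,v') \<in> comm_rel G"
  shows "(comm_comp u v, comm_comp u' v') \<in> comm_rel G"
proof -
  obtain A B f A1 B1 f1 where uu: "u = (A,B,f)" "u' = (A1,B1,f1)" by (metis prod_cases3)
  obtain A' B' g A1' B1' g1 where vv: "v = (A',B',g)" "v' = (A1',B1',g1)" by (metis prod_cases3)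
  have I: "u \<in> comm_isos G" "u' \<in> comm_isos G" "v \<in> comm_isos G" "v' \<in> comm_isos G"
    using assms R_sub by auto
  obtain K where K: "fi K" "K \<subseteq> A" "K \<subseteq> A1" "\<forall>x\<in>K. f x = f1 x" using assms(1) unfolding uu mem_R by blast
  obtain K' where K': "fi K'" "K' \<subseteq> A'" "K' \<subseteq> A1'" "\<forall>x\<in>K'. g x = g1 x" using assms(2) unfolding vv mem_R by blast
  have u: "fi A" "fi B" "siso A B f" using I unfolding uu mem_I by auto
  have u1: "siso A1 B1 f1" using I unfolding uu mem_I by auto
  have KB: "fi (K' \<inter> B)" using fi_int K'(1) u(2) by blast
  define K'' where "K'' = {x\<in>A. f x \<in> K' \<inter> B} \<inter> K"
  have fK'': "fi K''" unfolding K''_def using fi_int[OF fi_preimage[OF u(3) u(1) KB] K(1)] by blast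
  have s1: "K'' \<subseteq> {x\<in>A. f x \<in> B \<inter> A'}" unfolding K''_def using K' by auto
  have s2: "K'' \<subseteq> {x\<in>A1. f1 x \<in> B1 \<inter> A1'}" unfolding K''_def using K K' siso_in[OF u1] by auto
  have eq: "\<forall>x\<in>K''. (g \<circ> f) x = (g1 \<circ> f1) x" unfolding K''_def using K K' by auto
  show ?thesis using comp_I[OF I(1,3)] comp_I[OF I(2,4)] fK'' s1 s2 eq
    unfolding uu vv comm_comp_def by (simp only: prod.case mem_R) blast
qed

end

context group begin

definition eI :: "'a set \<times> 'a set \<times> ('a \<Rightarrow> 'a)" where "eI = (carrier G, carrier G, \<lambda>x. x)"
definition uinv :: "'a set \<times> 'a set \<times> ('a \<Rightarrow> 'a) \<Rightarrow> 'a set \<times> 'a set \<times> ('a \<Rightarrow> 'a)" where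
  "uinv u = (case u of (A,B,f) \<Rightarrow> (B, A, inv_into A f))"
definition cls where "cls u = comm_rel G `` {u}"

lemma fi_carrier: "fi (carrier G)"
proof -
  have "cov (carrier G) {\<one>}" unfolding cov_def by auto
  thus ?thesis unfolding fi_def using subgroup_self by blast
qed

lemma eI_I: "eI \<in> comm_isos G"
proof -
  have "siso (carrier G) (carrier G) (\<lambda>x. x)" unfolding siso_def using subgroup_self by auto
  thus ?thesis unfolding eI_def mem_I using fi_carrier by blast
qed

lemma uinv_I: assumes "u \<in> comm_isos G" shows "uinv u \<in> comm_isos G"
proof -
  obtain A B f where u: "u = (A,B,f)" by (metis prod_cases3)
  have e: "uinv u = (B, A, inv_into A f)" unfolding u uinv_def by simp
  have I: "fi A" "fi B" "siso A B f" using assms unfolding u mem_I by auto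
  show ?thesis unfolding e mem_I using I siso_invmap[OF I(3)] by blast
qed

lemma comp_uinv1: assumes "u \<in> comm_isos G" shows "(comm_comp u (uinv u), eI) \<in> comm_rel G"
proof -
  obtain A B f where u: "u = (A,B,f)" by (metis prod_cases3)
  have I: "fi A" "fi B" "siso A B f" using assms unfolding u mem_I by auto
  have inj: "inj_on f A" and im: "f ` A = B" using I(3) unfolding siso_def by auto
  have c: "comm_comp u (uinv u) \<in> comm_isos G" using comp_I[OF assms uinv_I[OF assms]] .
  have eq: "comm_comp u (uinv u) = ({x\<in>A. f x \<in> B \<inter> B}, inv_into A f ` (B \<inter> B), inv_into A f \<circ> f)"
    unfolding u uinv_def comm_comp_def by simp
  have "A \<subseteq> {x\<in>A. f x \<in> B \<inter> B}" using im by blast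
  moreover have "A \<subseteq> carrier G" using fi_sub[OF I(1)] subgroup.subset by blast
  moreover have "\<forall>x\<in>A. (inv_into A f \<circ> f) x = x" using inj by simp
  ultimately show ?thesis using c eI_I I(1) unfolding eq eI_def mem_R by (intro conjI exI[where x=A]) simp_all
qed

lemma comp_uinv2: assumes "u \<in> comm_isos G" shows "(comm_comp (uinv u) u, eI) \<in> comm_rel G"
proof -
  obtain A B f where u: "u = (A,B,f)" by (metis prod_cases3)
  have I: "fi A" "fi B" "siso A B f" using assms unfolding u mem_I by auto
  have inj: "inj_on f A" and im: "f ` A = B" using I(3) unfolding siso_def by auto
  have c: "comm_comp (uinv u) u \<in> comm_isos G" using comp_I[OF uinv_I[OF assms] assms] .
  have eq: "comm_comp (uinv u) u = ({x\<in>B. inv_into A f x \<in> A \<inter> A}, f ` (A \<inter> A), f \<circ> inv_into A f)"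
    unfolding u uinv_def comm_comp_def by simp
  have "B \<subseteq> {x\<in>B. inv_into A f x \<in> A \<inter> A}" using im by (auto intro: inv_into_into)
  moreover have "B \<subseteq> carrier G" using fi_sub[OF I(2)] subgroup.subset by blast
  moreover have "\<forall>x\<in>B. (f \<circ> inv_into A f) x = x" using im by (auto intro: f_inv_into_f)
  ultimately show ?thesis using c eI_I I(2) unfolding eq eI_def mem_R by (intro conjI exI[where x=B]) simp_all
qed

lemma inv_unique_R: assumes u: "u \<in> comm_isos G" and w: "w \<in> comm_isos G"
  and r: "(comm_comp u w, eI) \<in> comm_rel G" shows "(w, uinv u) \<in> comm_rel G"
proof -
  obtain A B f where uu: "u = (A,B,f)" by (metis prod_cases3)
  obtain A' B' g where ww: "w = (A',B',g)" by (metis prod_cases3)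
  have I: "fi A" "fi B" "siso A B f" using u unfolding uu mem_I by auto
  have inj: "inj_on f A" and im: "f ` A = B" using I(3) unfolding siso_def by auto
  have eq: "comm_comp u w = ({x\<in>A. f x \<in> B \<inter> A'}, g ` (B \<inter> A'), g \<circ> f)"
    unfolding uu ww comm_comp_def by simp
  obtain K where K: "fi K" "K \<subseteq> {x\<in>A. f x \<in> B \<inter> A'}" "\<forall>x\<in>K. (g \<circ> f) x = x"
    using r unfolding eq eI_def mem_R by blast
  have KA: "K \<subseteq> A" using K(2) by blast
  have fK: "fi (f ` K)" using fi_image[OF I(3) I(2) K(1) KA] .
  have s1: "f ` K \<subseteq> A'" "f ` K \<subseteq> B" using K(2) by auto
  have "\<forall>y\<in>f ` K. g y = inv_into A f y"
  proof
    fix y assume "y \<in> f ` K"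
    then obtain x where x: "x \<in> K" "y = f x" by blast
    have "g y = x" using K(3) x by simp
    moreover have "inv_into A f y = x" using x KA inj by (simp add: subsetD)
    ultimately show "g y = inv_into A f y" by simp
  qed
  moreover have e: "uinv u = (B, A, inv_into A f)" unfolding uu uinv_def by simp
  ultimately show ?thesis using w uinv_I[OF u] fK s1 unfolding ww e mem_R by (intro conjI exI[where x="f ` K"]) simp_all
qed

lemma cls_carrier: "u \<in> comm_isos G \<Longrightarrow> cls u \<in> carrier (Comm G)"
  unfolding Comm_def cls_def by (simp add: quotientI)

lemma carrier_cls: "c \<in> carrier (Comm G) \<Longrightarrow> \<exists>u\<in>comm_isos G. c = cls u"
  unfolding Comm_def cls_def by (auto elim: quotientE)

lemma one_Comm: "\<one>\<^bsub>Comm G\<^esub> = cls eI"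
  unfolding Comm_def cls_def eI_def by simp

lemma cls_eq: "(u,v) \<in> comm_rel G \<Longrightarrow> cls u = cls v"
  unfolding cls_def using equiv_class_eq[OF R_equiv] by blast

lemma in_cls: "u \<in> comm_isos G \<Longrightarrow> u \<in> cls u"
  unfolding cls_def using R_refl by blast

lemma mult_cls: assumes u: "u \<in> comm_isos G" and v: "v \<in> comm_isos G"
  shows "cls u \<otimes>\<^bsub>Comm G\<^esub> cls v = cls (comm_comp u v)"
proof -
  define S where "S = {comm_comp a b | a b. a \<in> cls u \<and> b \<in> cls v}"
  have m: "cls u \<otimes>\<^bsub>Comm G\<^esub> cls v = comm_rel G `` S"
    unfolding S_def Comm_def comm_mult_def by simp
  have Srel: "(comm_comp u v, s) \<in> comm_rel G" if sS: "s \<in> S" for s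
  proof -
    obtain a b where "s = comm_comp a b" "a \<in> cls u" "b \<in> cls v" using sS unfolding S_def by blast
    thus ?thesis using comp_R unfolding cls_def by simp
  qed
  have inS: "comm_comp u v \<in> S" unfolding S_def using in_cls u v by blast
  have "comm_rel G `` S = cls (comm_comp u v)"
  proof
    show "comm_rel G `` S \<subseteq> cls (comm_comp u v)"
      unfolding cls_def using Srel R_trans by blast
    show "cls (comm_comp u v) \<subseteq> comm_rel G `` S"
      unfolding cls_def using inS by blast
  qed
  thus ?thesis using m by simp
qed

lemma inv_cls: assumes u: "u \<in> comm_isos G" shows "inv\<^bsub>Comm G\<^esub> (cls u) = cls (uinv u)"
  unfolding m_inv_def
proof (rule the_equality)
  have ui: "uinv u \<in> comm_isos G" using uinv_I[OF u] .
  show "cls (uinv u) \<in> carrier (Comm G) \<and> cls u \<otimes>\<^bsub>Comm G\<^esub> cls (uinv u) = \<one>\<^bsub>Comm G\<^esub> \<and>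
        cls (uinv u) \<otimes>\<^bsub>Comm G\<^esub> cls u = \<one>\<^bsub>Comm G\<^esub>"
    using cls_carrier[OF ui] mult_cls[OF u ui] mult_cls[OF ui u] one_Comm
      cls_eq[OF comp_uinv1[OF u]] cls_eq[OF comp_uinv2[OF u]] by simp
next
  fix y assume y: "y \<in> carrier (Comm G) \<and> cls u \<otimes>\<^bsub>Comm G\<^esub> y = \<one>\<^bsub>Comm G\<^esub> \<and> y \<otimes>\<^bsub>Comm G\<^esub> cls u = \<one>\<^bsub>Comm G\<^esub>"
  then obtain w where w: "w \<in> comm_isos G" "y = cls w" using carrier_cls by blast
  have "cls (comm_comp u w) = cls eI" using y w mult_cls[OF u w(1)] one_Comm by simp
  hence "comm_comp u w \<in> cls eI" using in_cls[OF comp_I[OF u w(1)]] by simp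
  hence "(eI, comm_comp u w) \<in> comm_rel G" unfolding cls_def by simp
  hence "(comm_comp u w, eI) \<in> comm_rel G" by (rule R_sym)
  hence "(w, uinv u) \<in> comm_rel G" using inv_unique_R[OF u w(1)] by blast
  thus "y = cls (uinv u)" using w cls_eq by simp
qed

end

context group begin

lemma pow_in_fi: assumes K: "fi K" and x: "x \<in> carrier G"
  shows "\<exists>m. 0 < m \<and> m \<le> card (rcosets K) \<and> x [^] m \<in> K"
proof -
  have sg: "subgroup K G" and fin: "finite (rcosets K)" using K fin_index_iff unfolding fi_def fin_index_subgroup_def by auto
  define n where "n = card (rcosets K)"
  define c where "c i = K #> (x [^] (i::nat))" for i
  have cin: "c ` {0..n} \<subseteq> rcosets K"
  proof (rule image_subsetI)
    fix i assume "i \<in> {0..n}"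
    have "x [^] i \<in> carrier G" using x by simp
    thus "c i \<in> rcosets K" unfolding c_def by (rule rcosetsI[OF subgroup.subset[OF sg]])
  qed
  have "\<not> inj_on c {0..n}"
  proof
    assume "inj_on c {0..n}"
    hence "card {0..n} \<le> card (rcosets K)" using card_inj_on_le[OF _ cin fin] by blast
    thus False unfolding n_def by simp
  qed
  then obtain i j where ij: "i \<in> {0..n}" "j \<in> {0..n}" "i \<noteq> j" "c i = c j" unfolding inj_on_def by blast
  have main: "x [^] (b - a) \<in> K" if ab: "a < b" "c a = c b" for a b
  proof -
    have xa: "x [^] a \<in> carrier G" and xb: "x [^] b \<in> carrier G" using x by auto
    have "x [^] b \<in> K #> x [^] a" using ab(2) rcos_self[OF xb sg] unfolding c_def by simp
    hence k: "x [^] b \<otimes> inv (x [^] a) \<in> K" using subgroup.rcos_module[OF sg is_group xa xb] by blast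
    have "x [^] b = x [^] (b - a) \<otimes> x [^] a" using nat_pow_mult[OF x, of "b - a" a] ab(1) by simp
    hence "x [^] b \<otimes> inv (x [^] a) = x [^] (b - a)" using xa x by (simp add: m_assoc)
    thus ?thesis using k by simp
  qed
  show ?thesis
  proof (cases "i < j")
    case True
    hence "0 < j - i" "j - i \<le> card (rcosets K)" using ij unfolding n_def by auto
    thus ?thesis using main[of i j] True ij by blast
  next
    case False hence "j < i" using ij by auto
    hence "0 < i - j" "i - j \<le> card (rcosets K)" using ij unfolding n_def by auto
    thus ?thesis using main[of j i] \<open>j < i\<close> ij by metis
  qed
qed

definition pr :: "nat \<Rightarrow> 'a set \<Rightarrow> bool" where
  "pr p A \<longleftrightarrow> (\<forall>x\<in>carrier G. \<exists>m. coprime m p \<and> x [^] m \<in> A)"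

lemma pr_large: assumes K: "fi K" and p: "Factorial_Ring.prime (p::nat)" and lt: "card (rcosets K) < p" shows "pr p K"
  unfolding pr_def
proof
  fix x assume x: "x \<in> carrier G"
  obtain m where m: "0 < m" "m \<le> card (rcosets K)" "x [^] m \<in> K" using pow_in_fi[OF K x] by blast
  have "\<not> p dvd m" using m lt by (meson dvd_imp_le leD order_le_less_trans)
  hence "coprime m p" using prime_imp_coprime[OF p] by (simp add: coprime_commute)
  thus "\<exists>m. coprime m p \<and> x [^] m \<in> K" using m by blast
qed

lemma pr_carrier: "pr p (carrier G)" unfolding pr_def
  by (metis coprime_1_left nat_pow_closed)

lemma pr_int: assumes B: "pr p B" "subgroup B G" and A: "pr p A'" shows "pr p (B \<inter> A')"
  unfolding pr_def
proof
  fix x assume x: "x \<in> carrier G"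
  obtain m where m: "coprime m p" "x [^] m \<in> B" using B x unfolding pr_def by blast
  obtain m' where m': "coprime m' p" "(x [^] m) [^] m' \<in> A'" using A x unfolding pr_def by blast
  have "(x [^] m) [^] m' \<in> B" using sub_pow[OF B(2) m(2)] .
  moreover have "coprime (m * m') p" using m m' by simp
  moreover have "(x [^] m) [^] m' = x [^] (m * m')" using nat_pow_pow[OF x] .
  ultimately show "\<exists>m. coprime m p \<and> x [^] m \<in> B \<inter> A'" using m' by (metis IntI)
qed

lemma pr_pre: assumes f: "siso A B f" and A: "pr p A" and C: "pr p C"
  shows "pr p {x\<in>A. f x \<in> C}"
  unfolding pr_def
proof
  fix x assume x: "x \<in> carrier G"
  have sA: "subgroup A G" using f siso_sub by blast
  obtain m where m: "coprime m p" "x [^] m \<in> A" using A x unfolding pr_def by blast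
  obtain m' where m': "coprime m' p" "(f (x [^] m)) [^] m' \<in> C"
    using C siso_carr[OF f m(2)] unfolding pr_def by blast
  have "(x [^] m) [^] m' \<in> A" using sub_pow[OF sA m(2)] .
  moreover have "f ((x [^] m) [^] m') = (f (x [^] m)) [^] m'" using siso_pow[OF f m(2)] .
  moreover have "coprime (m * m') p" using m m' by simp
  ultimately show "\<exists>m. coprime m p \<and> x [^] m \<in> {x\<in>A. f x \<in> C}" using m' nat_pow_pow[OF x] by (metis (mono_tags, lifting) mem_Collect_eq)
qed

lemma pr_img: assumes f: "siso A B f" and B: "pr p B" and C: "pr p C" and CA: "C \<subseteq> A"
  shows "pr p (f ` C)"
  unfolding pr_def
proof
  fix y assume y: "y \<in> carrier G"
  have im: "f ` A = B" using f unfolding siso_def by blast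
  obtain m where m: "coprime m p" "y [^] m \<in> B" using B y unfolding pr_def by blast
  then obtain a where a: "a \<in> A" "y [^] m = f a" using im by (metis imageE)
  have ac: "a \<in> carrier G" using sub_carr[OF siso_sub(1)[OF f] a(1)] .
  obtain m' where m': "coprime m' p" "a [^] m' \<in> C" using C ac unfolding pr_def by blast
  have "f (a [^] m') = (y [^] m) [^] m'" using siso_pow[OF f a(1)] a(2) by simp
  hence "y [^] (m * m') \<in> f ` C" using m' nat_pow_pow[OF y] by (metis image_eqI)
  moreover have "coprime (m * m') p" using m m' by simp
  ultimately show "\<exists>m. coprime m p \<and> y [^] m \<in> f ` C" by blast
qed

definition prI :: "nat \<Rightarrow> 'a set \<times> 'a set \<times> ('a \<Rightarrow> 'a) \<Rightarrow> bool" where "prI p u \<longleftrightarrow> (case u of (A,B,f) \<Rightarrow> pr p A \<and> pr p B)"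

lemma prI_comp: assumes u: "u \<in> comm_isos G" and v: "v \<in> comm_isos G" and pu: "prI p u" and pv: "prI p v"
  shows "prI p (comm_comp u v)"
proof -
  obtain A B f A' B' g where uv: "u = (A,B,f)" "v = (A',B',g)" by (metis prod_cases3)
  have I: "fi A" "fi B" "siso A B f" "fi A'" "fi B'" "siso A' B' g" using u v unfolding uv mem_I by auto
  have P: "pr p A" "pr p B" "pr p A'" "pr p B'" using pu pv unfolding uv prI_def by auto
  have C: "pr p (B \<inter> A')" using pr_int[OF P(2) fi_sub[OF I(2)] P(3)] .
  have "pr p {x\<in>A. f x \<in> B \<inter> A'}" using pr_pre[OF I(3) P(1) C] .
  moreover have "pr p (g ` (B \<inter> A'))" using pr_img[OF I(6) P(4) C] by blast
  ultimately show ?thesis unfolding uv comm_comp_def prI_def by simp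
qed

lemma prI_uinv: "prI p u \<Longrightarrow> prI p (uinv u)"
  by (cases u) (auto simp: prI_def uinv_def)

lemma prI_eI: "prI p eI" unfolding prI_def eI_def using pr_carrier by simp

end

context group begin

lemma gid3: assumes "x1 \<in> carrier G" "y1 \<in> carrier G" "z1 \<in> carrier G" "w1 \<in> carrier G"
  and e: "inv x1 \<otimes> y1 = z1 \<otimes> inv w1" shows "y1 \<otimes> w1 = x1 \<otimes> z1"
proof -
  have "y1 = x1 \<otimes> (z1 \<otimes> inv w1)" using e assms inv_solve_left' by simp
  hence "y1 \<otimes> w1 = x1 \<otimes> (z1 \<otimes> inv w1) \<otimes> w1" by simp
  also have "\<dots> = x1 \<otimes> z1" using assms by (simp add: m_assoc)
  finally show ?thesis .
qed

lemma gid4: assumes "h \<in> carrier G" "a \<in> carrier G" "h' \<in> carrier G" "a' \<in> carrier G"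
  and e: "h \<otimes> a = h' \<otimes> a'" shows "inv h' \<otimes> h = a' \<otimes> inv a"
proof -
  have "h' \<otimes> (a' \<otimes> inv a) = (h' \<otimes> a') \<otimes> inv a" using assms by (simp add: m_assoc)
  also have "\<dots> = (h \<otimes> a) \<otimes> inv a" by (simp only: e)
  also have "\<dots> = h" using assms(1-4) by (simp add: m_assoc)
  finally have "h = h' \<otimes> (a' \<otimes> inv a)" by simp
  thus ?thesis using inv_solve_left'[of "a' \<otimes> inv a" h' h] assms by simp
qed

lemma gid5: assumes "h \<in> carrier G" "a \<in> carrier G" "h' \<in> carrier G" "a' \<in> carrier G"
  shows "h \<otimes> a \<otimes> (h' \<otimes> a') = (h \<otimes> (a \<otimes> h' \<otimes> inv a)) \<otimes> (a \<otimes> a')"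
  using assms by (simp add: m_assoc) (simp add: m_assoc[symmetric])

lemma gid6: assumes "p1 \<in> carrier G" "q1 \<in> carrier G" "r1 \<in> carrier G" "s1 \<in> carrier G"
  shows "p1 \<otimes> (q1 \<otimes> r1 \<otimes> inv q1) \<otimes> (q1 \<otimes> s1) = (p1 \<otimes> q1) \<otimes> (r1 \<otimes> s1)"
  using assms by (simp add: m_assoc) (simp add: m_assoc[symmetric])

lemma conj_pow: assumes "a \<in> carrier G" "h \<in> carrier G"
  shows "(a \<otimes> h \<otimes> inv a) [^] (n::nat) = a \<otimes> h [^] n \<otimes> inv a"
proof (induction n)
  case 0 thus ?case using assms by simp
next
  case (Suc n)
  have "(a \<otimes> h \<otimes> inv a) [^] Suc n = a \<otimes> h [^] n \<otimes> inv a \<otimes> (a \<otimes> h \<otimes> inv a)" using Suc by simp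
  also have "\<dots> = a \<otimes> (h [^] n \<otimes> h) \<otimes> inv a" using assms by (simp add: m_assoc) (simp add: m_assoc[symmetric])
  finally show ?case by simp
qed

end

context group begin

lemma uroot: "unique_root G \<Longrightarrow> x \<in> carrier G \<Longrightarrow> y \<in> carrier G \<Longrightarrow> 0 < n \<Longrightarrow> x [^] (n::nat) = y [^] n \<Longrightarrow> x = y"
  unfolding unique_root_def by blast

lemma pow_p_in_H: assumes N: "H \<lhd> G" and c: "card (rcosets H) = p" and x: "x \<in> carrier G"
  shows "x [^] p \<in> H"
proof -
  interpret N: normal H G by (rule N)
  have grp: "group (G Mod H)" by (rule N.factorgroup_is_group)
  have car: "carrier (G Mod H) = rcosets H" unfolding carrier_FactGroup RCOSETS_def by auto
  have ord: "order (G Mod H) = p" unfolding order_def car c ..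
  have xc: "H #> x \<in> carrier (G Mod H)" using car x rcosetsI[OF N.subset] by simp
  have "(H #> x) [^]\<^bsub>G Mod H\<^esub> p = \<one>\<^bsub>G Mod H\<^esub>" using group.pow_order_eq_1[OF grp xc] ord by simp
  hence "H #> (x [^] p) = H" using N.FactGroup_pow[OF x, of p] by simp
  thus ?thesis using coset_join1[OF _ _ normal_imp_subgroup[OF N]] x by simp
qed

lemma decomp: assumes N: "H \<lhd> G" and c: "card (rcosets H) = p" and pp: "Factorial_Ring.prime p"
  and A: "subgroup A G" and prA: "pr p A" and x: "x \<in> carrier G"
  shows "\<exists>h\<in>H. \<exists>a\<in>A. x = h \<otimes> a"
proof -
  obtain m where m: "coprime m p" "x [^] m \<in> A" using prA x unfolding pr_def by blast
  have "m \<noteq> 0"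
  proof
    assume "m = 0"
    hence "p = 1" using m(1) by simp
    thus False using pp by simp
  qed
  then obtain k y where ky: "m * k = p * y + gcd m p" using bezout_nat by blast
  hence ky1: "m * k = p * y + 1" using m(1) by simp
  have H: "subgroup H G" using normal_imp_subgroup[OF N] .
  have xp: "x [^] p \<in> H" using pow_p_in_H[OF N c x] .
  define h where "h = inv ((x [^] p) [^] y)"
  define a where "a = (x [^] m) [^] k"
  have hH: "h \<in> H" unfolding h_def using subgroup.m_inv_closed[OF H sub_pow[OF H xp]] .
  have aA: "a \<in> A" unfolding a_def using sub_pow[OF A m(2)] .
  have "a = x [^] (p * y) \<otimes> x" unfolding a_def using x ky1 nat_pow_pow[OF x] nat_pow_mult[OF x, of "p*y" 1] by simp
  hence "h \<otimes> a = x" unfolding h_def using x nat_pow_pow[OF x] by (simp add: m_assoc[symmetric])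
  thus ?thesis using hH aA by metis
qed

context
  fixes H p \<phi> A B \<psi> K
  assumes ur: "unique_root G" and N: "H \<lhd> G" and cp: "card (rcosets H) = p" and pp: "Factorial_Ring.prime p"
    and phi: "siso H H \<phi>" and psi: "siso A B \<psi>" and fA: "fi A" and fB: "fi B"
    and prA: "pr p A" and prB: "pr p B"
    and fK: "fi K" and KH: "K \<subseteq> H" and KA: "K \<subseteq> A" and eqK: "\<forall>x\<in>K. \<phi> x = \<psi> x"
begin

lemma sH: "subgroup H G" using normal_imp_subgroup[OF N] .
lemma sA: "subgroup A G" using fi_sub[OF fA] .
lemma sB: "subgroup B G" using fi_sub[OF fB] .

lemma X3: assumes "x \<in> A" "x \<in> H" shows "\<phi> x = \<psi> x"
proof -
  have xc: "x \<in> carrier G" using sub_carr[OF sA assms(1)] .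
  obtain n :: nat where n: "0 < n" "x [^] n \<in> K" using pow_in_fi[OF fK xc] by blast
  have "\<phi> x [^] n = \<phi> (x [^] n)" using siso_pow[OF phi assms(2)] by simp
  also have "\<dots> = \<psi> (x [^] n)" using eqK n by blast
  also have "\<dots> = \<psi> x [^] n" using siso_pow[OF psi assms(1)] .
  finally show ?thesis using uroot[OF ur siso_carr[OF phi assms(2)] siso_carr[OF psi assms(1)] n(1)] by blast
qed

lemma X4: assumes a: "a \<in> A" and h: "h \<in> H"
  shows "\<phi> (a \<otimes> h \<otimes> inv a) = \<psi> a \<otimes> \<phi> h \<otimes> inv (\<psi> a)"
proof -
  have ac: "a \<in> carrier G" using sub_carr[OF sA a] .
  have hc: "h \<in> carrier G" using sub_carr[OF sH h] .
  obtain n :: nat where n: "0 < n" "h [^] n \<in> A" using pow_in_fi[OF fA hc] by blast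
  have hn: "h [^] n \<in> H" using sub_pow[OF sH h] .
  have cH: "a \<otimes> h \<otimes> inv a \<in> H" using normal.inv_op_closed2[OF N ac h] .
  have ia: "inv a \<in> A" using subgroup.m_inv_closed[OF sA a] .
  have cnA: "a \<otimes> h [^] n \<otimes> inv a \<in> A" using subgroup.m_closed[OF sA subgroup.m_closed[OF sA a n(2)] ia] .
  have cnH: "a \<otimes> h [^] n \<otimes> inv a \<in> H" using normal.inv_op_closed2[OF N ac hn] .
  have psc: "\<psi> a \<in> carrier G" using siso_carr[OF psi a] .
  have phc: "\<phi> h \<in> carrier G" using siso_carr[OF phi h] .
  have "\<phi> (a \<otimes> h \<otimes> inv a) [^] n = \<phi> ((a \<otimes> h \<otimes> inv a) [^] n)" using siso_pow[OF phi cH] by simp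
  also have "\<dots> = \<phi> (a \<otimes> h [^] n \<otimes> inv a)" using conj_pow[OF ac hc] by simp
  also have "\<dots> = \<psi> (a \<otimes> h [^] n \<otimes> inv a)" using X3[OF cnA cnH] .
  also have "\<dots> = \<psi> a \<otimes> \<psi> (h [^] n) \<otimes> \<psi> (inv a)"
    using siso_mult[OF psi subgroup.m_closed[OF sA a n(2)] ia] siso_mult[OF psi a n(2)] by simp
  also have "\<dots> = \<psi> a \<otimes> \<phi> (h [^] n) \<otimes> inv (\<psi> a)" using X3[OF n(2) hn] siso_inv[OF psi a] by simp
  also have "\<dots> = \<psi> a \<otimes> \<phi> h [^] n \<otimes> inv (\<psi> a)" using siso_pow[OF phi h] by simp
  also have "\<dots> = (\<psi> a \<otimes> \<phi> h \<otimes> inv (\<psi> a)) [^] n" using conj_pow[OF psc phc] by simp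
  finally show ?thesis using uroot[OF ur _ _ n(1)] siso_carr[OF phi cH] psc phc by simp
qed

lemma X5: assumes "h \<in> H" "a \<in> A" "h' \<in> H" "a' \<in> A" "h \<otimes> a = h' \<otimes> a'"
  shows "\<phi> h \<otimes> \<psi> a = \<phi> h' \<otimes> \<psi> a'"
proof -
  have c: "h \<in> carrier G" "a \<in> carrier G" "h' \<in> carrier G" "a' \<in> carrier G"
    using assms sub_carr[OF sH] sub_carr[OF sA] by auto
  have e: "inv h' \<otimes> h = a' \<otimes> inv a" using gid4[OF c assms(5)] .
  have zH: "inv h' \<otimes> h \<in> H" using subgroup.m_closed[OF sH subgroup.m_inv_closed[OF sH assms(3)] assms(1)] .
  have zA: "a' \<otimes> inv a \<in> A" using subgroup.m_closed[OF sA assms(4) subgroup.m_inv_closed[OF sA assms(2)]] .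
  have "\<phi> (inv h' \<otimes> h) = \<psi> (a' \<otimes> inv a)" using X3[OF _ zH] zA e by simp
  moreover have "\<phi> (inv h' \<otimes> h) = inv (\<phi> h') \<otimes> \<phi> h"
    using siso_mult[OF phi subgroup.m_inv_closed[OF sH assms(3)] assms(1)] siso_inv[OF phi assms(3)] by simp
  moreover have "\<psi> (a' \<otimes> inv a) = \<psi> a' \<otimes> inv (\<psi> a)"
    using siso_mult[OF psi assms(4) subgroup.m_inv_closed[OF sA assms(2)]] siso_inv[OF psi assms(2)] by simp
  ultimately have "inv (\<phi> h') \<otimes> \<phi> h = \<psi> a' \<otimes> inv (\<psi> a)" by simp
  from gid3[OF siso_carr[OF phi assms(3)] siso_carr[OF phi assms(1)] siso_carr[OF psi assms(4)] siso_carr[OF psi assms(2)] this]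
  show ?thesis .
qed

definition \<Phi> where "\<Phi> x = (let ha = (SOME ha. fst ha \<in> H \<and> snd ha \<in> A \<and> x = fst ha \<otimes> snd ha) in \<phi> (fst ha) \<otimes> \<psi> (snd ha))"

lemma Phi_eq: assumes "h \<in> H" "a \<in> A" shows "\<Phi> (h \<otimes> a) = \<phi> h \<otimes> \<psi> a"
proof -
  define ha where "ha = (SOME ha. fst ha \<in> H \<and> snd ha \<in> A \<and> h \<otimes> a = fst ha \<otimes> snd ha)"
  have "\<exists>ha. fst ha \<in> H \<and> snd ha \<in> A \<and> h \<otimes> a = fst ha \<otimes> snd ha" using assms by (intro exI[where x="(h,a)"]) simp
  hence s: "fst ha \<in> H \<and> snd ha \<in> A \<and> h \<otimes> a = fst ha \<otimes> snd ha" unfolding ha_def by (rule someI_ex)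
  have "\<Phi> (h \<otimes> a) = \<phi> (fst ha) \<otimes> \<psi> (snd ha)" unfolding \<Phi>_def ha_def Let_def by simp
  also have "\<dots> = \<phi> h \<otimes> \<psi> a" using X5[OF assms s[THEN conjunct1] s[THEN conjunct2, THEN conjunct1] s[THEN conjunct2, THEN conjunct2]] by simp
  finally show ?thesis .
qed

lemma dec: "x \<in> carrier G \<Longrightarrow> \<exists>h\<in>H. \<exists>a\<in>A. x = h \<otimes> a"
  using decomp[OF N cp pp sA prA] by blast

lemma Phi_H: "h \<in> H \<Longrightarrow> \<Phi> h = \<phi> h"
proof -
  assume h: "h \<in> H"
  have "\<Phi> (h \<otimes> \<one>) = \<phi> h \<otimes> \<psi> \<one>" using Phi_eq[OF h subgroup.one_closed[OF sA]] .
  thus ?thesis using h sub_carr[OF sH h] siso_one[OF psi] siso_carr[OF phi h] by simp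
qed

lemma Phi_carr: "x \<in> carrier G \<Longrightarrow> \<Phi> x \<in> carrier G"
  using dec Phi_eq siso_carr[OF phi] siso_carr[OF psi] by (metis m_closed)

lemma Phi_hom: "\<Phi> \<in> hom G G"
proof (rule homI)
  fix x assume "x \<in> carrier G" thus "\<Phi> x \<in> carrier G" by (rule Phi_carr)
next
  fix x y assume x: "x \<in> carrier G" and y: "y \<in> carrier G"
  obtain h a where ha: "h \<in> H" "a \<in> A" "x = h \<otimes> a" using dec[OF x] by blast
  obtain h' a' where ha': "h' \<in> H" "a' \<in> A" "y = h' \<otimes> a'" using dec[OF y] by blast
  have c: "h \<in> carrier G" "a \<in> carrier G" "h' \<in> carrier G" "a' \<in> carrier G"
    using ha ha' sub_carr[OF sH] sub_carr[OF sA] by auto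
  have cH: "a \<otimes> h' \<otimes> inv a \<in> H" using normal.inv_op_closed2[OF N c(2) ha'(1)] .
  have xy: "x \<otimes> y = (h \<otimes> (a \<otimes> h' \<otimes> inv a)) \<otimes> (a \<otimes> a')" using gid5[OF c] ha ha' by simp
  have "\<Phi> (x \<otimes> y) = \<phi> (h \<otimes> (a \<otimes> h' \<otimes> inv a)) \<otimes> \<psi> (a \<otimes> a')"
    unfolding xy using Phi_eq subgroup.m_closed[OF sH ha(1) cH] subgroup.m_closed[OF sA ha(2) ha'(2)] by blast
  also have "\<dots> = \<phi> h \<otimes> (\<psi> a \<otimes> \<phi> h' \<otimes> inv (\<psi> a)) \<otimes> (\<psi> a \<otimes> \<psi> a')"
    using siso_mult[OF phi ha(1) cH] siso_mult[OF psi ha(2) ha'(2)] X4[OF ha(2) ha'(1)] by simp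
  also have "\<dots> = (\<phi> h \<otimes> \<psi> a) \<otimes> (\<phi> h' \<otimes> \<psi> a')"
    using gid6 siso_carr[OF phi ha(1)] siso_carr[OF psi ha(2)] siso_carr[OF phi ha'(1)] siso_carr[OF psi ha'(2)] by blast
  also have "\<dots> = \<Phi> x \<otimes> \<Phi> y" using Phi_eq ha ha' by simp
  finally show "\<Phi> (x \<otimes> y) = \<Phi> x \<otimes> \<Phi> y" .
qed

lemma Phi_iso: "\<Phi> \<in> iso G G"
proof -
  have gh: "group_hom G G \<Phi>" unfolding group_hom_def group_hom_axioms_def using Phi_hom is_group by blast
  have surj: "carrier G \<subseteq> \<Phi> ` carrier G"
  proof
    fix y assume y: "y \<in> carrier G"
    obtain h b where hb: "h \<in> H" "b \<in> B" "y = h \<otimes> b" using decomp[OF N cp pp sB prB y] by blast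
    have "h \<in> \<phi> ` H" "b \<in> \<psi> ` A" using hb phi psi unfolding siso_def by auto
    then obtain h0 a0 where h0: "h0 \<in> H" "h = \<phi> h0" and a0: "a0 \<in> A" "b = \<psi> a0" by blast
    have "\<Phi> (h0 \<otimes> a0) = y" using Phi_eq[OF h0(1) a0(1)] h0 a0 hb by simp
    moreover have "h0 \<otimes> a0 \<in> carrier G" using h0 a0 sub_carr[OF sH] sub_carr[OF sA] by blast
    ultimately show "y \<in> \<Phi> ` carrier G" by blast
  qed
  have ker: "\<forall>x\<in>carrier G. \<Phi> x = \<one> \<longrightarrow> x = \<one>"
  proof (intro ballI impI)
    fix x assume x: "x \<in> carrier G" and e: "\<Phi> x = \<one>"
    have xp: "x [^] p \<in> H" using pow_p_in_H[OF N cp x] .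
    have "\<Phi> (x [^] p) = \<Phi> x [^] p" using group_hom.hom_nat_pow[OF gh x] by simp
    hence "\<phi> (x [^] p) = \<one>" using e Phi_H[OF xp] by simp
    hence "\<phi> (x [^] p) = \<phi> \<one>" using siso_one[OF phi] by simp
    moreover have "inj_on \<phi> H" using phi unfolding siso_def by blast
    ultimately have "x [^] p = \<one>" using xp subgroup.one_closed[OF sH] by (meson inj_onD)
    hence "x [^] p = \<one> [^] p" by simp
    moreover have "0 < p" using pp prime_gt_0_nat by blast
    ultimately show "x = \<one>" using uroot[OF ur x one_closed] by blast
  qed
  show ?thesis using group_hom.iso_iff[OF gh] surj ker by blast
qed

lemma ext_main: "\<exists>\<Psi>\<in>iso G G. \<forall>x\<in>H. \<Psi> x = \<phi> x"
  using Phi_iso Phi_H by blast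

end

end


theorem theorem2p7:
  fixes G :: "('a, 'b) monoid_scheme"
  assumes "group G"
    and "unique_root G"
    and "infinite {p::nat. Factorial_Ring.prime p \<and>
           (\<exists>H. H \<lhd> G \<and> card (rcosets\<^bsub>G\<^esub> H) = p \<and>
              (\<exists>\<phi> \<in> iso (G\<lparr>carrier := H\<rparr>) (G\<lparr>carrier := H\<rparr>).
                 \<not> (\<exists>\<psi> \<in> iso G G. \<forall>x\<in>H. \<psi> x = \<phi> x)))}"
  shows "\<not> finitely_generated_group (Comm G)"
proof
  interpret group G by fact
  assume "finitely_generated_group (Comm G)"
  then obtain S where S: "finite S" "S \<subseteq> carrier (Comm G)" "generate (Comm G) S = carrier (Comm G)"
    unfolding finitely_generated_group_def by blast
  define rep where "rep s = (SOME u. u \<in> comm_isos G \<and> s = cls u)" for s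
  have rep: "rep s \<in> comm_isos G \<and> s = cls (rep s)" if "s \<in> S" for s
  proof -
    have "\<exists>u. u \<in> comm_isos G \<and> s = cls u" using carrier_cls S(2) that by blast
    thus ?thesis unfolding rep_def by (rule someI_ex)
  qed
  define sz where "sz u = (case u of (A,B,f) \<Rightarrow> card (rcosets\<^bsub>G\<^esub> A) + card (rcosets\<^bsub>G\<^esub> B))" for u :: "'a set \<times> 'a set \<times> ('a \<Rightarrow> 'a)"
  define N where "N = Max (insert 0 ((\<lambda>s. sz (rep s)) ` S))"
  have N: "sz (rep s) \<le> N" if "s \<in> S" for s
    unfolding N_def using S(1) that by (intro Max_ge) auto
  obtain p where p: "p > N" "Factorial_Ring.prime p" and
    ex: "\<exists>H. H \<lhd> G \<and> card (rcosets\<^bsub>G\<^esub> H) = p \<and>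
              (\<exists>\<phi> \<in> iso (G\<lparr>carrier := H\<rparr>) (G\<lparr>carrier := H\<rparr>).
                 \<not> (\<exists>\<psi> \<in> iso G G. \<forall>x\<in>H. \<psi> x = \<phi> x))"
    using assms(3) unfolding infinite_nat_iff_unbounded by blast
  then obtain H \<phi> where H: "H \<lhd> G" "card (rcosets\<^bsub>G\<^esub> H) = p" and phi: "\<phi> \<in> iso (G\<lparr>carrier := H\<rparr>) (G\<lparr>carrier := H\<rparr>)"
    and noext: "\<not> (\<exists>\<psi> \<in> iso G G. \<forall>x\<in>H. \<psi> x = \<phi> x)" by blast
  define M where "M = {c. \<exists>u\<in>comm_isos G. c = cls u \<and> prI p u}"
  have gen: "generate (Comm G) S \<subseteq> M"
  proof
    fix c assume "c \<in> generate (Comm G) S"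
    thus "c \<in> M"
    proof (induction rule: generate.induct)
      case one thus ?case unfolding M_def using one_Comm eI_I prI_eI by blast
    next
      case (incl h)
      obtain A B f where u: "rep h = (A,B,f)" by (metis prod_cases3)
      have I: "fi A" "fi B" using rep[OF incl] unfolding u mem_I by auto
      have "card (rcosets\<^bsub>G\<^esub> A) + card (rcosets\<^bsub>G\<^esub> B) \<le> N" using N[OF incl] unfolding u sz_def by simp
      hence "pr p A" "pr p B" using pr_large[OF I(1) p(2)] pr_large[OF I(2) p(2)] p(1) by auto
      hence "prI p (rep h)" unfolding u prI_def by simp
      thus ?case unfolding M_def using rep[OF incl] by blast
    next
      case (inv h)
      obtain u where u: "u \<in> comm_isos G" "h = cls u" using carrier_cls S(2) inv by blast
      obtain A B f where uu: "rep h = (A,B,f)" by (metis prod_cases3)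
      have I: "fi A" "fi B" using rep[OF inv] unfolding uu mem_I by auto
      have "card (rcosets\<^bsub>G\<^esub> A) + card (rcosets\<^bsub>G\<^esub> B) \<le> N" using N[OF inv] unfolding uu sz_def by simp
      hence "pr p A" "pr p B" using pr_large[OF I(1) p(2)] pr_large[OF I(2) p(2)] p(1) by auto
      hence pu: "prI p (rep h)" unfolding uu prI_def by simp
      have "inv\<^bsub>Comm G\<^esub> h = cls (uinv (rep h))" using inv_cls rep[OF inv] by metis
      thus ?case unfolding M_def using uinv_I rep[OF inv] prI_uinv[OF pu] by blast
    next
      case (eng h1 h2)
      obtain u1 where u1: "u1 \<in> comm_isos G" "h1 = cls u1" "prI p u1" using eng.IH(1) unfolding M_def by blast
      obtain u2 where u2: "u2 \<in> comm_isos G" "h2 = cls u2" "prI p u2" using eng.IH(2) unfolding M_def by blast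
      have "h1 \<otimes>\<^bsub>Comm G\<^esub> h2 = cls (comm_comp u1 u2)" using mult_cls[OF u1(1) u2(1)] u1 u2 by simp
      thus ?case unfolding M_def using comp_I[OF u1(1) u2(1)] prI_comp[OF u1(1) u2(1) u1(3) u2(3)] by blast
    qed
  qed
  have sH: "subgroup H G" using normal_imp_subgroup[OF H(1)] .
  have fH: "fi H"
  proof -
    have "finite (rcosets\<^bsub>G\<^esub> H)" using H(2) p(2) by (metis card.infinite not_prime_0)
    thus ?thesis using fi_iff sH unfolding fin_index_subgroup_def by blast
  qed
  have sphi: "siso H H \<phi>" using iso_siso[OF sH sH] phi by blast
  have phiI: "(H, H, \<phi>) \<in> comm_isos G" unfolding mem_I using fH sphi by blast
  have "cls (H, H, \<phi>) \<in> M" using gen S(3) cls_carrier[OF phiI] by blast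
  then obtain u where u: "u \<in> comm_isos G" "cls (H,H,\<phi>) = cls u" "prI p u" unfolding M_def by blast
  obtain A B \<psi> where uu: "u = (A,B,\<psi>)" by (metis prod_cases3)
  have "u \<in> cls (H,H,\<phi>)" using in_cls[OF u(1)] u(2) by simp
  hence "((H,H,\<phi>), u) \<in> comm_rel G" unfolding cls_def by simp
  then obtain K where K: "fi K" "K \<subseteq> H" "K \<subseteq> A" "\<forall>x\<in>K. \<phi> x = \<psi> x" unfolding uu mem_R by blast
  have uI: "fi A" "fi B" "siso A B \<psi>" using u(1) unfolding uu mem_I by auto
  have pr: "pr p A" "pr p B" using u(3) unfolding uu prI_def by auto
  have "\<exists>\<Psi>\<in>iso G G. \<forall>x\<in>H. \<Psi> x = \<phi> x"
    using ext_main[OF assms(2) H(1) H(2) p(2) sphi uI(3) uI(1) uI(2) pr K] .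
  thus False using noext by blast
qed


end
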